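(* Let $\alpha,\beta,\gamma,\delta\in\mathbb{R}$ with $\alpha+\delta\neq 0$ and $\alpha\gamma=0$, and let $G_7$ be the connected, simply connected Lie group whose Lie algebra $\mathfrak{g}_7$ has a basis $\{e_1,e_2,e_3\}$ with $[e_1,e_2]=-\alpha e_1-\beta e_2-\beta e_3$, $[e_1,e_3]=\alpha e_1+\beta e_2+\beta e_3$, $[e_2,e_3]=\gamma e_1+\delta e_2+\delta e_3$, equipped with the left-invariant Lorentzian metric $g$ for which $\{e_1,e_2,e_3\}$ is pseudo-orthonormal with $e_3$ timelike, and with the product structure $J$. Let $\lambda_0,c\in\mathbb{R}$. Then there exists a derivation $D$ of $\mathfrak{g}_7$ with $\widetilde{\mathrm{Ric}}^0=(s^0\lambda_0+c)\mathrm{Id}+D$ (i.e. $(G_7,g,J)$ is an algebraic Schouten soliton associated to the canonical connection $\nabla^0$) if and only if one of the following holds: (i) $\alpha=\gamma=0$, $\delta\neq0$ and $c=0$; (ii) $\alpha\neq0$, $\beta=\gamma=0$, $\alpha+\delta\neq0$ and $c=-\frac12\alpha^2+2\alpha^2\lambda_0$.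
   Context: Pseudo-orthonormal means $g(e_1,e_1)=g(e_2,e_2)=1$, $g(e_3,e_3)=-1$, $g(e_i,e_j)=0$ for $i\neq j$; left-invariant tensors are identified with their values on $\mathfrak{g}$. $\nabla$ is the Levi-Civita connection of $g$. The product structure $J$ is the left-invariant endomorphism with $Je_1=e_1$, $Je_2=e_2$, $Je_3=-e_3$. The canonical connection is $\nabla^0_XY=\nabla_XY-\frac12(\nabla_XJ)JY$, and the Kobayashi–Nomizu connection is $\nabla^1_XY=\nabla^0_XY-\frac14[(\nabla_YJ)JX-(\nabla_{JY}J)X]$. For $k=0,1$: $R^k(X,Y)Z=\nabla^k_X\nabla^k_YZ-\nabla^k_Y\nabla^k_XZ-\nabla^k_{[X,Y]}Z$; $\rho^k(X,Y)=-g(R^k(X,e_1)Y,e_1)-g(R^k(X,e_2)Y,e_2)+g(R^k(X,e_3)Y,e_3)$; $\widetilde\rho^k(X,Y)=\frac12(\rho^k(X,Y)+\rho^k(Y,X))$; $\widetilde{\mathrm{Ric}}^k$ is defined by $\widetilde\rho^k(X,Y)=g(\widetilde{\mathrm{Ric}}^k(X),Y)$; and $s^k=\widetilde\rho^k(e_1,e_1)+\widetilde\rho^k(e_2,e_2)-\widetilde\rho^k(e_3,e_3)$. A derivation of $\mathfrak{g}$ is a linear map $D$ with $D[X,Y]=[DX,Y]+[X,DY]$. $(G,g,J)$ is an algebraic Schouten soliton associated to $\nabla^k$ (with real constants $\lambda_0,c$) if $\widetilde{\mathrm{Ric}}^k=(s^k\lambda_0+c)\mathrm{Id}+D$ for some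 derivation $D$. *)

theory Defs
  imports "HOL-Analysis.Analysis"
begin

text \<open>Index set of the basis {e1,e2,e3} of the 3-dimensional Lie algebra.
  Left-invariant vector fields are identified with vectors in real ^ idx.\<close>

datatype idx = E1 | E2 | E3

lemma UNIV_idx: "(UNIV :: idx set) = {E1, E2, E3}"
  using idx.exhaust by auto

instance idx :: finite
  by standard (simp add: UNIV_idx)

type_synonym vec3 = "real ^ idx"

definition e :: "idx \<Rightarrow> vec3" where
  "e i = axis i 1"

definition eps :: "idx \<Rightarrow> real" where
  "eps i = (case i of E1 \<Rightarrow> 1 | E2 \<Rightarrow> 1 | E3 \<Rightarrow> -1)"

definition gm :: "vec3 \<Rightarrow> vec3 \<Rightarrow> real" where
  "gm X Y = (\<Sum>k\<in>UNIV. eps k * (X $ k) * (Y $ k))"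

definition Jm :: "vec3 \<Rightarrow> vec3" where
  "Jm X = (\<chi> k. eps k * (X $ k))"

definition br7 :: "real \<Rightarrow> real \<Rightarrow> real \<Rightarrow> real \<Rightarrow> vec3 \<Rightarrow> vec3 \<Rightarrow> vec3" where
  "br7 a b c d X Y =
     (X$E1 * Y$E2 - X$E2 * Y$E1) *\<^sub>R ((-a) *\<^sub>R e E1 + (-b) *\<^sub>R e E2 + (-b) *\<^sub>R e E3)
   + (X$E1 * Y$E3 - X$E3 * Y$E1) *\<^sub>R (a *\<^sub>R e E1 + b *\<^sub>R e E2 + b *\<^sub>R e E3)
   + (X$E2 * Y$E3 - X$E3 * Y$E2) *\<^sub>R (c *\<^sub>R e E1 + d *\<^sub>R e E2 + d *\<^sub>R e E3)"

text \<open>Levi-Civita connection on left-invariant fields, via the Koszul formula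
  2 g(\<nabla>_X Y, Z) = g([X,Y],Z) - g([Y,Z],X) + g([Z,X],Y),
  expanded in the pseudo-orthonormal basis.\<close>
definition LC :: "(vec3 \<Rightarrow> vec3 \<Rightarrow> vec3) \<Rightarrow> vec3 \<Rightarrow> vec3 \<Rightarrow> vec3" where
  "LC br X Y = (\<Sum>k\<in>UNIV. (eps k * (1/2) *
       (gm (br X Y) (e k) - gm (br Y (e k)) X + gm (br (e k) X) Y)) *\<^sub>R e k)"

definition covJ :: "(vec3 \<Rightarrow> vec3 \<Rightarrow> vec3) \<Rightarrow> vec3 \<Rightarrow> vec3 \<Rightarrow> vec3" where
  "covJ br X Y = LC br X (Jm Y) - Jm (LC br X Y)"

definition nabla0 :: "(vec3 \<Rightarrow> vec3 \<Rightarrow> vec3) \<Rightarrow> vec3 \<Rightarrow> vec3 \<Rightarrow> vec3" where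
  "nabla0 br X Y = LC br X Y - (1/2) *\<^sub>R covJ br X (Jm Y)"

definition nabla1 :: "(vec3 \<Rightarrow> vec3 \<Rightarrow> vec3) \<Rightarrow> vec3 \<Rightarrow> vec3 \<Rightarrow> vec3" where
  "nabla1 br X Y = nabla0 br X Y
     - (1/4) *\<^sub>R (covJ br Y (Jm X) - covJ br (Jm Y) X)"

definition curv :: "(vec3 \<Rightarrow> vec3 \<Rightarrow> vec3) \<Rightarrow> (vec3 \<Rightarrow> vec3 \<Rightarrow> vec3)
                    \<Rightarrow> vec3 \<Rightarrow> vec3 \<Rightarrow> vec3 \<Rightarrow> vec3" where
  "curv nab br X Y Z = nab X (nab Y Z) - nab Y (nab X Z) - nab (br X Y) Z"

definition ricci_form :: "(vec3 \<Rightarrow> vec3 \<Rightarrow> vec3) \<Rightarrow> (vec3 \<Rightarrow> vec3 \<Rightarrow> vec3)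
                          \<Rightarrow> vec3 \<Rightarrow> vec3 \<Rightarrow> real" where
  "ricci_form nab br X Y = - (\<Sum>k\<in>UNIV. eps k * gm (curv nab br X (e k) Y) (e k))"

definition sym_ricci_form :: "(vec3 \<Rightarrow> vec3 \<Rightarrow> vec3) \<Rightarrow> (vec3 \<Rightarrow> vec3 \<Rightarrow> vec3)
                          \<Rightarrow> vec3 \<Rightarrow> vec3 \<Rightarrow> real" where
  "sym_ricci_form nab br X Y = (1/2) * (ricci_form nab br X Y + ricci_form nab br Y X)"

text \<open>Ricci operator: g(Ric X, Y) = symmetrized rho(X,Y).\<close>
definition ricci_op :: "(vec3 \<Rightarrow> vec3 \<Rightarrow> vec3) \<Rightarrow> (vec3 \<Rightarrow> vec3 \<Rightarrow> vec3)
                          \<Rightarrow> vec3 \<Rightarrow> vec3" where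
  "ricci_op nab br X = (\<Sum>k\<in>UNIV. (eps k * sym_ricci_form nab br X (e k)) *\<^sub>R e k)"

definition scal :: "(vec3 \<Rightarrow> vec3 \<Rightarrow> vec3) \<Rightarrow> (vec3 \<Rightarrow> vec3 \<Rightarrow> vec3) \<Rightarrow> real" where
  "scal nab br = (\<Sum>k\<in>UNIV. eps k * sym_ricci_form nab br (e k) (e k))"

definition is_derivation :: "(vec3 \<Rightarrow> vec3 \<Rightarrow> vec3) \<Rightarrow> (vec3 \<Rightarrow> vec3) \<Rightarrow> bool" where
  "is_derivation br D \<longleftrightarrow> linear D \<and> (\<forall>X Y. D (br X Y) = br (D X) Y + br X (D Y))"

definition algebraic_schouten_soliton ::
  "(vec3 \<Rightarrow> vec3 \<Rightarrow> vec3) \<Rightarrow> (vec3 \<Rightarrow> vec3 \<Rightarrow> vec3) \<Rightarrow> real \<Rightarrow> real \<Rightarrow> bool" where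
  "algebraic_schouten_soliton nab br lambda0 c \<longleftrightarrow>
     (\<exists>D. is_derivation br D \<and>
          (\<forall>X. ricci_op nab br X = (scal nab br * lambda0 + c) *\<^sub>R X + D X))"

end

theory Submission imports Defs begin
definition mk3 :: "real \<Rightarrow> real \<Rightarrow> real \<Rightarrow> vec3" where
  "mk3 x y z = (\<chi> k. case k of E1 \<Rightarrow> x | E2 \<Rightarrow> y | E3 \<Rightarrow> z)"

lemma mk3_comp[simp]: "mk3 x y z $ E1 = x" "mk3 x y z $ E2 = y" "mk3 x y z $ E3 = z"
  by (simp_all add: mk3_def)

lemma vec3_eq: "(X::vec3) = Y \<longleftrightarrow> X$E1 = Y$E1 \<and> X$E2 = Y$E2 \<and> X$E3 = Y$E3"
  unfolding vec_eq_iff by (metis idx.exhaust)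

lemma sum_idx: "(\<Sum>k\<in>UNIV. f k) = f E1 + f E2 + f E3"
  by (simp add: UNIV_idx add.assoc)

lemma e_comp[simp]: "e i $ k = (if k = i then 1 else 0)"
  by (simp add: e_def axis_def)

lemma eps_simps[simp]: "eps E1 = 1" "eps E2 = 1" "eps E3 = -1"
  by (simp_all add: eps_def)

lemma br7_eq: "br7 a b c d X Y = mk3
   (-a*(X$E1 * Y$E2 - X$E2 * Y$E1) + a*(X$E1 * Y$E3 - X$E3 * Y$E1) + c*(X$E2 * Y$E3 - X$E3 * Y$E2))
   (-b*(X$E1 * Y$E2 - X$E2 * Y$E1) + b*(X$E1 * Y$E3 - X$E3 * Y$E1) + d*(X$E2 * Y$E3 - X$E3 * Y$E2))
   (-b*(X$E1 * Y$E2 - X$E2 * Y$E1) + b*(X$E1 * Y$E3 - X$E3 * Y$E1) + d*(X$E2 * Y$E3 - X$E3 * Y$E2))"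
  by (simp add: vec3_eq br7_def algebra_simps)

lemma LC_comp: "LC br X Y $ k = eps k * (1/2) * (gm (br X Y) (e k) - gm (br Y (e k)) X + gm (br (e k) X) Y)"
  unfolding LC_def by (cases k) (simp_all add: sum_idx field_simps)

lemma gm_eq: "gm X Y = X$E1*Y$E1 + X$E2*Y$E2 - X$E3*Y$E3"
  by (simp add: gm_def sum_idx)

lemma Jm_comp[simp]: "Jm X $ k = eps k * X $ k"
  by (simp add: Jm_def)

lemma LC7: "LC (br7 a b c d) X Y = mk3
  (-1/2*c*X$E3*Y$E2 + 1/2*c*X$E2*Y$E3 - b*X$E3*Y$E3 + b*X$E3*Y$E2 + b*X$E2*Y$E3 - b*X$E2*Y$E2 + a*X$E1*Y$E3 - a*X$E1*Y$E2)
  (-d*X$E3*Y$E3 + d*X$E2*Y$E3 + 1/2*c*X$E3*Y$E1 + 1/2*c*X$E1*Y$E3 - b*X$E3*Y$E1 + b*X$E2*Y$E1 + a*X$E1*Y$E1)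
  (-d*X$E3*Y$E2 + d*X$E2*Y$E2 + 1/2*c*X$E2*Y$E1 + 1/2*c*X$E1*Y$E2 - b*X$E3*Y$E1 + b*X$E2*Y$E1 + a*X$E1*Y$E1)"
  unfolding vec3_eq LC_comp gm_eq br7_eq
  by (simp add: field_simps)

lemma Jm_Jm[simp]: "Jm (Jm Y) = Y"
  unfolding vec3_eq by simp

lemma n0_eq: "nabla0 (br7 a b c d) X Y = mk3 (- (a*X$E1 + b*X$E2 + (c/2-b)*X$E3) * Y$E2) ((a*X$E1 + b*X$E2 + (c/2-b)*X$E3) * Y$E1) 0"
  unfolding vec3_eq nabla0_def covJ_def LC7
  by (simp add: field_simps)

definition wf :: "real \<Rightarrow> real \<Rightarrow> real \<Rightarrow> vec3 \<Rightarrow> real" where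
  "wf a b c V = a*V$E1 + b*V$E2 + (c/2-b)*V$E3"

lemma n0w: "nabla0 (br7 a b c d) X Y = mk3 (- wf a b c X * Y$E2) (wf a b c X * Y$E1) 0"
  unfolding n0_eq wf_def by simp

lemma curv_eq: "curv (nabla0 (br7 a b c d)) (br7 a b c d) X Y Z =
   mk3 (wf a b c (br7 a b c d X Y) * Z$E2) (- wf a b c (br7 a b c d X Y) * Z$E1) 0"
  unfolding curv_def n0w vec3_eq by (simp add: algebra_simps)

lemma rf_eq: "ricci_form (nabla0 (br7 a b c d)) (br7 a b c d) X Y =
   wf a b c (br7 a b c d X (e E2)) * Y$E1 - wf a b c (br7 a b c d X (e E1)) * Y$E2"
  unfolding ricci_form_def curv_eq by (simp add: sum_idx gm_eq)

lemma ric_eq: "ricci_op (nabla0 (br7 a b c d)) (br7 a b c d) X = mk3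
   ((-b*c/2 - a^2)*X$E1 + (-c*d/4 - a*c/2)*X$E3)
   ((-b*c/2-a^2)*X$E2 + (b*c/4+a^2/2)*X$E3)
   ((c*d/4+a*c/2)*X$E1 + (-b*c/4-a^2/2)*X$E2)"
  unfolding vec3_eq ricci_op_def sym_ricci_form_def rf_eq wf_def br7_eq
  by (simp add: sum_idx field_simps power2_eq_square)

lemma scal_eq: "scal (nabla0 (br7 a b c d)) (br7 a b c d) = -b*c - 2*a^2"
  unfolding scal_def sym_ricci_form_def rf_eq wf_def br7_eq
  by (simp add: sum_idx field_simps power2_eq_square)

definition Dm :: "real \<Rightarrow> real \<Rightarrow> real \<Rightarrow> real \<Rightarrow> real \<Rightarrow> vec3 \<Rightarrow> vec3" where
  "Dm a b c d m X = mk3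
   ((-b*c/2 - a^2 - m)*X$E1 + (-c*d/4 - a*c/2)*X$E3)
   ((-b*c/2-a^2 - m)*X$E2 + (b*c/4+a^2/2)*X$E3)
   ((c*d/4+a*c/2)*X$E1 + (-b*c/4-a^2/2)*X$E2 - m * X$E3)"

lemma sol_iff: "algebraic_schouten_soliton (nabla0 (br7 a b c d)) (br7 a b c d) l cc \<longleftrightarrow>
   is_derivation (br7 a b c d) (Dm a b c d ((-b*c - 2*a^2)*l + cc))"
proof -
  have "(\<forall>X. ricci_op (nabla0 (br7 a b c d)) (br7 a b c d) X = (scal (nabla0 (br7 a b c d)) (br7 a b c d) * l + cc) *\<^sub>R X + D X)
     \<longleftrightarrow> D = Dm a b c d ((-b*c - 2*a^2)*l + cc)" for D
  proof
    assume H: "\<forall>X. ricci_op (nabla0 (br7 a b c d)) (br7 a b c d) X = (scal (nabla0 (br7 a b c d)) (br7 a b c d) * l + cc) *\<^sub>R X + D X"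
    show "D = Dm a b c d ((-b*c - 2*a^2)*l + cc)"
    proof
      fix X
      have "ricci_op (nabla0 (br7 a b c d)) (br7 a b c d) X = (scal (nabla0 (br7 a b c d)) (br7 a b c d) * l + cc) *\<^sub>R X + D X"
        using H by blast
      then show "D X = Dm a b c d ((-b*c - 2*a^2)*l + cc) X"
        unfolding ric_eq scal_eq vec3_eq Dm_def by (simp add: algebra_simps)
    qed
  next
    assume "D = Dm a b c d ((-b*c - 2*a^2)*l + cc)"
    then show "\<forall>X. ricci_op (nabla0 (br7 a b c d)) (br7 a b c d) X = (scal (nabla0 (br7 a b c d)) (br7 a b c d) * l + cc) *\<^sub>R X + D X"
      unfolding ric_eq scal_eq vec3_eq Dm_def by (simp add: algebra_simps)
  qed
  then show ?thesis unfolding algebraic_schouten_soliton_def by auto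
qed

lemma Dm_linear: "linear (Dm a b c d m)"
  by (rule linearI) (simp_all add: vec3_eq Dm_def field_simps)

lemma fwd:
  fixes a b c d l cc :: real
  assumes ad: "a + d \<noteq> 0" and ac: "a * c = 0"
    and H: "is_derivation (br7 a b c d) (Dm a b c d ((-b*c - 2*a^2)*l + cc))"
  shows "(a = 0 \<and> c = 0 \<and> d \<noteq> 0 \<and> cc = 0) \<or>
            (a \<noteq> 0 \<and> b = 0 \<and> c = 0 \<and> a + d \<noteq> 0 \<and>
             cc = - (1/2) * a^2 + 2 * a^2 * l)"
proof -
  let ?D = "Dm a b c d ((-b*c - 2*a^2)*l + cc)"
  let ?br = "br7 a b c d"
  have HH: "\<And>X Y. ?D (?br X Y) = ?br (?D X) Y + ?br X (?D Y)"
    using H unfolding is_derivation_def by blast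
  have h12: "?D (?br (e E1) (e E2)) = ?br (?D (e E1)) (e E2) + ?br (e E1) (?D (e E2))" by (rule HH)
  have h13: "?D (?br (e E1) (e E3)) = ?br (?D (e E1)) (e E3) + ?br (e E1) (?D (e E3))" by (rule HH)
  have h23: "?D (?br (e E2) (e E3)) = ?br (?D (e E2)) (e E3) + ?br (e E2) (?D (e E3))" by (rule HH)
  from h12 have "?D (?br (e E1) (e E2)) $ E1 = (?br (?D (e E1)) (e E2) + ?br (e E1) (?D (e E2))) $ E1" by simp
  then have q1: "c^2*d/4 + b*c*d/4 - a*cc + a*c^2/2 + a*b*c/4 + a*b*c*l - a^3/2 + 2*a^3*l = 0"
    unfolding Dm_def br7_eq by (simp add: field_simps power2_eq_square power3_eq_cube)
  from h12 have "?D (?br (e E1) (e E2)) $ E2 = (?br (?D (e E1)) (e E2) + ?br (e E1) (?D (e E2))) $ E2" by simp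
  then have q2: "c*d^2/4 - b*cc - b^2*c/2 + b^2*c*l + a*c*d/2 - a^2*b + 2*a^2*b*l = 0"
    unfolding Dm_def br7_eq by (simp add: field_simps power2_eq_square power3_eq_cube)
  from h13 have "?D (?br (e E1) (e E3)) $ E1 = (?br (?D (e E1)) (e E3) + ?br (e E1) (?D (e E3))) $ E1" by simp
  then have q3: "-b*c*d/4 + a*cc - a*b*c/4 - a*b*c*l + a^3/2 - 2*a^3*l = 0"
    unfolding Dm_def br7_eq by (simp add: field_simps power2_eq_square power3_eq_cube)
  from h23 have "?D (?br (e E2) (e E3)) $ E2 = (?br (?D (e E2)) (e E3) + ?br (e E2) (?D (e E3))) $ E2" by simp
  then have q4: "d*cc + b*c*d/2 - b*c*d*l + a*b*c/2 + a^2*d/2 - 2*a^2*d*l = 0"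
    unfolding Dm_def br7_eq by (simp add: field_simps power2_eq_square power3_eq_cube)
  show ?thesis
  proof (cases "a = 0")
    case True
    then have d0: "d \<noteq> 0" using ad by simp
    from q1 True have "c*d*(c+b) = 0" by algebra
    with d0 have c1: "c*(c+b) = 0" by simp
    from q3 True have "b*c*d = 0" by algebra
    with d0 have c2: "b*c = 0" by simp
    from c1 c2 have "c*c = 0" by algebra
    then have c0: "c = 0" by simp
    from q4 True c0 have "d*cc = 0" by algebra
    with d0 have "cc = 0" by simp
    with True c0 d0 show ?thesis by simp
  next
    case False
    with ac have c0: "c = 0" by simp
    from q1 c0 have "a*(cc + a^2/2 - 2*a^2*l) = 0" by algebra
    with False have cc0: "cc = - (1/2) * a^2 + 2 * a^2 * l" by simp
    from q2 c0 cc0 have "b*a^2 = 0" by algebra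
    with False have "b = 0" by simp
    with False c0 cc0 ad show ?thesis by simp
  qed
qed

lemma bwd:
  fixes a b c d l cc :: real
  assumes "(a = 0 \<and> c = 0 \<and> d \<noteq> 0 \<and> cc = 0) \<or>
            (a \<noteq> 0 \<and> b = 0 \<and> c = 0 \<and> a + d \<noteq> 0 \<and>
             cc = - (1/2) * a^2 + 2 * a^2 * l)"
  shows "is_derivation (br7 a b c d) (Dm a b c d ((-b*c - 2*a^2)*l + cc))"
  unfolding is_derivation_def
proof (intro conjI Dm_linear allI)
  fix X Y
  show "Dm a b c d ((-b*c - 2*a^2)*l + cc) (br7 a b c d X Y) =
      br7 a b c d (Dm a b c d ((-b*c - 2*a^2)*l + cc) X) Y + br7 a b c d X (Dm a b c d ((-b*c - 2*a^2)*l + cc) Y)"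
    using assms
  proof
    assume "a = 0 \<and> c = 0 \<and> d \<noteq> 0 \<and> cc = 0"
    then show ?thesis unfolding vec3_eq Dm_def br7_eq by (simp add: algebra_simps)
  next
    assume "a \<noteq> 0 \<and> b = 0 \<and> c = 0 \<and> a + d \<noteq> 0 \<and> cc = - (1/2) * a^2 + 2 * a^2 * l"
    then have b0: "b = 0" and c0: "c = 0" and ccv: "cc = - (1/2) * a^2 + 2 * a^2 * l" by auto
    show ?thesis unfolding vec3_eq Dm_def br7_eq b0 c0 ccv by (simp add: algebra_simps)
  qed
qed

theorem theorem4p14:
  fixes a b c d lambda0 cc :: real
  assumes "a + d \<noteq> 0" and "a * c = 0"
  shows "algebraic_schouten_soliton (nabla0 (br7 a b c d)) (br7 a b c d) lambda0 cc \<longleftrightarrow>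
           ((a = 0 \<and> c = 0 \<and> d \<noteq> 0 \<and> cc = 0) \<or>
            (a \<noteq> 0 \<and> b = 0 \<and> c = 0 \<and> a + d \<noteq> 0 \<and>
             cc = - (1/2) * a^2 + 2 * a^2 * lambda0))"
  unfolding sol_iff using fwd[OF assms] bwd by blast
end
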